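(* Let $\mathbb{K}$ be an algebraically closed field of characteristic zero, $X$ an irreducible affine variety over $\mathbb{K}$, and $U\subseteq X$ a principal open subset (i.e., $U=\{x\in X\mid h(x)\neq 0\}$ for some $h\in\mathbb{K}[X]$). Then for any $\mathbb{G}_a$-subgroup $H$ of $\mathrm{Aut}(U)$ there exists a $\mathbb{G}_a$-subgroup $H'$ of $\mathrm{Aut}(X)$ such that $Hx = H'x$ for every $x\in U$.
   Context: $\mathbb{G}_a=(\mathbb{K},+)$; a $\mathbb{G}_a$-subgroup of the automorphism group of a variety is the image of an effective regular $\mathbb{G}_a$-action on it. *)

theory Defs
  imports "HOL-Computational_Algebra.Polynomial"
begin

definition alg_closed :: "'a::field itself \<Rightarrow> bool" where
  "alg_closed _ \<longleftrightarrow> (\<forall>p::'a poly. degree p > 0 \<longrightarrow> (\<exists>x. poly p x = 0))"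

(* Polynomial functions K^V \<rightarrow> K, where points of affine space are functions V \<Rightarrow> K
   (V a finite variable type). *)
inductive_set polyfun :: "(('v \<Rightarrow> 'a::comm_ring_1) \<Rightarrow> 'a) set" where
  pf_const: "(\<lambda>x. c) \<in> polyfun"
| pf_var:   "(\<lambda>x. x v) \<in> polyfun"
| pf_add:   "p \<in> polyfun \<Longrightarrow> q \<in> polyfun \<Longrightarrow> (\<lambda>x. p x + q x) \<in> polyfun"
| pf_mult:  "p \<in> polyfun \<Longrightarrow> q \<in> polyfun \<Longrightarrow> (\<lambda>x. p x * q x) \<in> polyfun"

definition zariski_closed :: "('v \<Rightarrow> 'a::comm_ring_1) set \<Rightarrow> bool" where
  "zariski_closed Y \<longleftrightarrow> (\<exists>S \<subseteq> polyfun. Y = {x. \<forall>p\<in>S. p x = 0})"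

definition irreducible_affine_variety :: "('v \<Rightarrow> 'a::comm_ring_1) set \<Rightarrow> bool" where
  "irreducible_affine_variety X \<longleftrightarrow> zariski_closed X \<and> X \<noteq> {} \<and>
     (\<forall>Y Z. zariski_closed Y \<longrightarrow> zariski_closed Z \<longrightarrow> X \<subseteq> Y \<union> Z \<longrightarrow> X \<subseteq> Y \<or> X \<subseteq> Z)"

definition principal_open :: "('v \<Rightarrow> 'a::comm_ring_1) set \<Rightarrow> (('v \<Rightarrow> 'a) \<Rightarrow> 'a) \<Rightarrow> ('v \<Rightarrow> 'a) set" where
  "principal_open X h = {x \<in> X. h x \<noteq> 0}"

(* Regular functions on G_a \<times> U, where U = principal_open X h:
   the ring K[t] \<otimes> K[X]_h, i.e. functions (t,x) \<mapsto> (\<Sum>i\<le>d. q_i(x) t^i) / h(x)^k. *)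
definition regular_on_Ga_times :: "('v \<Rightarrow> 'a::field) set \<Rightarrow> (('v \<Rightarrow> 'a) \<Rightarrow> 'a)
     \<Rightarrow> ('a \<Rightarrow> ('v \<Rightarrow> 'a) \<Rightarrow> 'a) \<Rightarrow> bool" where
  "regular_on_Ga_times X h f \<longleftrightarrow>
     (\<exists>(d::nat) (k::nat) (q::nat \<Rightarrow> ('v \<Rightarrow> 'a) \<Rightarrow> 'a). (\<forall>i. q i \<in> polyfun) \<and>
        (\<forall>t. \<forall>x\<in>principal_open X h. f t x = (\<Sum>i\<le>d. q i x * t ^ i) / h x ^ k))"

(* An effective regular G_a-action on U = principal_open X h
   (its image in Aut(U) is a G_a-subgroup). *)
definition effective_Ga_action :: "('v \<Rightarrow> 'a::field) set \<Rightarrow> (('v \<Rightarrow> 'a) \<Rightarrow> 'a)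
     \<Rightarrow> ('a \<Rightarrow> ('v \<Rightarrow> 'a) \<Rightarrow> ('v \<Rightarrow> 'a)) \<Rightarrow> bool" where
  "effective_Ga_action X h A \<longleftrightarrow>
     (\<forall>t. \<forall>x\<in>principal_open X h. A t x \<in> principal_open X h) \<and>
     (\<forall>j. regular_on_Ga_times X h (\<lambda>t x. A t x j)) \<and>
     (\<forall>x\<in>principal_open X h. A 0 x = x) \<and>
     (\<forall>s t. \<forall>x\<in>principal_open X h. A (s + t) x = A s (A t x)) \<and>
     (\<forall>t. t \<noteq> 0 \<longrightarrow> (\<exists>x\<in>principal_open X h. A t x \<noteq> x))"

definition Ga_orbit :: "('a \<Rightarrow> 'b \<Rightarrow> 'b) \<Rightarrow> 'b \<Rightarrow> 'b set" where
  "Ga_orbit A x = {A t x | t. True}"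

end

theory Submission
  imports Defs
begin

definition ptf :: "('a::field \<Rightarrow> 'a) \<Rightarrow> bool" where
  "ptf f \<longleftrightarrow> (\<exists>Q. \<forall>t. f t = poly Q t)"

lemma polyfun_comp:
  fixes F :: "'a::field \<Rightarrow> 'v \<Rightarrow> 'a"
  assumes "p \<in> polyfun" and "\<And>v. ptf (\<lambda>t. F t v)"
  shows "ptf (\<lambda>t. p (F t))"
  using assms(1)
proof (induction rule: polyfun.induct)
  case (pf_const c)
  then show ?case unfolding ptf_def by (rule exI[of _ "[:c:]"]) simp
next
  case (pf_var v)
  then show ?case using assms(2) by simp
next
  case (pf_add p q)
  then obtain P Q where "\<forall>t. p (F t) = poly P t" "\<forall>t. q (F t) = poly Q t" unfolding ptf_def by blast
  then show ?case unfolding ptf_def by (intro exI[of _ "P + Q"]) simp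
next
  case (pf_mult p q)
  then obtain P Q where "\<forall>t. p (F t) = poly P t" "\<forall>t. q (F t) = poly Q t" unfolding ptf_def by blast
  then show ?case unfolding ptf_def by (intro exI[of _ "P * Q"]) simp
qed

lemma polyfun_power: "h \<in> polyfun \<Longrightarrow> (\<lambda>x. h x ^ m) \<in> polyfun"
proof (induction m)
  case 0
  then show ?case using pf_const[of 1] by simp
next
  case (Suc m)
  then show ?case using pf_mult[OF Suc(2) Suc.IH[OF Suc(2)]] by simp
qed

lemma ptf_sum_form:
  fixes c :: "nat \<Rightarrow> 'a::field"
  shows "ptf (\<lambda>t. (\<Sum>i\<le>d. c i * t ^ i) / e)"
  unfolding ptf_def
  by (intro exI[of _ "smult (inverse e) (\<Sum>i\<le>d. monom (c i) i)"])
     (simp add: poly_sum poly_monom divide_inverse mult.commute)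

lemma ptf_const_if_noroot:
  fixes f :: "'a::field \<Rightarrow> 'a"
  assumes "alg_closed TYPE('a)" "ptf f" "\<And>t. f t \<noteq> 0"
  shows "f t = f 0"
proof -
  obtain Q where Q: "\<forall>t. f t = poly Q t" using assms(2) unfolding ptf_def by blast
  have "\<not> degree Q > 0"
    using assms(1,3) Q unfolding alg_closed_def by metis
  then have "degree Q = 0" by simp
  then obtain a where "Q = [:a:]" by (rule degree_eq_zeroE)
  then show ?thesis using Q by simp
qed

lemma ptf_zero_on_infinite:
  fixes f :: "'a::field \<Rightarrow> 'a"
  assumes "ptf f" "infinite S" "\<And>t. t \<in> S \<Longrightarrow> f t = 0"
  shows "f t = 0"
proof -
  obtain Q where Q: "\<forall>t. f t = poly Q t" using assms(1) unfolding ptf_def by blast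
  have "S \<subseteq> {x. poly Q x = 0}" using assms(3) Q by auto
  then have "infinite {x. poly Q x = 0}" using assms(2) finite_subset by blast
  then have "Q = 0" using poly_roots_finite by blast
  then show ?thesis using Q by simp
qed

lemma sum_zero_pow: "(\<Sum>i\<le>d. f i * (0::'a::field) ^ i) / e = f 0 / e"
proof -
  have "(\<Sum>i\<le>d. f i * (0::'a) ^ i) = f 0" by (induction d) auto
  then show ?thesis by simp
qed

lemma choice_3: "(\<And>j. \<exists>a b c. P j a b c) \<Longrightarrow> (\<And>f g k. (\<And>j. P j (f j) (g j) (k j)) \<Longrightarrow> thesis) \<Longrightarrow> thesis"
proof -
  assume a: "\<And>j. \<exists>a b c. P j a b c" and b: "\<And>f g k. (\<And>j. P j (f j) (g j) (k j)) \<Longrightarrow> thesis"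
  define F where "F j = (SOME abc. P j (fst abc) (fst (snd abc)) (snd (snd abc)))" for j
  have "P j (fst (F j)) (fst (snd (F j))) (snd (snd (F j)))" for j
    unfolding F_def by (rule someI_ex) (use a in auto)
  then show thesis by (rule b)
qed

theorem proposition4:
  fixes X :: "('n::finite \<Rightarrow> 'a::field_char_0) set"
    and h :: "('n \<Rightarrow> 'a) \<Rightarrow> 'a"
    and A :: "'a \<Rightarrow> ('n \<Rightarrow> 'a) \<Rightarrow> ('n \<Rightarrow> 'a)"
  assumes "alg_closed TYPE('a)"
    and "irreducible_affine_variety X"
    and "h \<in> polyfun"
    and "effective_Ga_action X h A"
  shows "\<exists>A'. effective_Ga_action X (\<lambda>_. 1) A' \<and>
           (\<forall>x\<in>principal_open X h. Ga_orbit A x = Ga_orbit A' x)"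
proof -
  let ?U = "principal_open X h"
  have Umem: "x \<in> ?U \<longleftrightarrow> x \<in> X \<and> h x \<noteq> 0" for x unfolding principal_open_def by simp
  have act_U: "\<forall>t. \<forall>x\<in>?U. A t x \<in> ?U"
    and reg: "\<forall>j. regular_on_Ga_times X h (\<lambda>t x. A t x j)"
    and act0: "\<forall>x\<in>?U. A 0 x = x"
    and actadd: "\<forall>s t. \<forall>x\<in>?U. A (s + t) x = A s (A t x)"
    and eff: "\<forall>t. t \<noteq> 0 \<longrightarrow> (\<exists>x\<in>?U. A t x \<noteq> x)"
    using assms(4) unfolding effective_Ga_action_def by blast+
  have ex3: "\<exists>d k q. (\<forall>i. q i \<in> polyfun) \<and>
        (\<forall>t. \<forall>x\<in>?U. A t x j = (\<Sum>i\<le>d. q i x * t ^ i) / h x ^ k)" for j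
    using reg unfolding regular_on_Ga_times_def by blast
  obtain dd kk qq where DKQ: "\<And>j. (\<forall>i. qq j i \<in> polyfun) \<and>
        (\<forall>t. \<forall>x\<in>?U. A t x j = (\<Sum>i\<le>dd j. qq j i x * t ^ i) / h x ^ kk j)"
    apply (rule choice_3[of "\<lambda>j d k q. (\<forall>i. q i \<in> polyfun) \<and> (\<forall>t. \<forall>x\<in>?U. A t x j = (\<Sum>i\<le>d. q i x * t ^ i) / h x ^ k)"])
    apply (rule ex3)
    by blast
  have coord_ptf: "ptf (\<lambda>t. A t x j)" if "x \<in> ?U" for x j
  proof -
    have "(\<lambda>t. A t x j) = (\<lambda>t. (\<Sum>i\<le>dd j. qq j i x * t ^ i) / h x ^ kk j)"
      using DKQ that by auto
    then show ?thesis using ptf_sum_form by simp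
  qed
  have inv: "h (A t x) = h x" if "x \<in> ?U" for t x
  proof -
    have p: "ptf (\<lambda>t. h (A t x))"
      by (rule polyfun_comp[OF assms(3)]) (rule coord_ptf[OF that])
    have "\<And>t. h (A t x) \<noteq> 0" using act_U that Umem by blast
    then have "h (A t x) = h (A 0 x)" using ptf_const_if_noroot[OF assms(1) p] by blast
    then show ?thesis using act0 that by simp
  qed
  define N where "N = (\<Sum>j\<in>UNIV. kk j) + 1"
  have kkN: "kk j < N" for j
  proof -
    have "kk j \<le> (\<Sum>j\<in>UNIV. kk j)" by (rule member_le_sum) auto
    then show ?thesis unfolding N_def by simp
  qed
  define A' where "A' = (\<lambda>t x. if h x = 0 then x else A (h x ^ N * t) x)"
  have A'U: "A' t x = A (h x ^ N * t) x" if "x \<in> ?U" for t x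
    using that Umem unfolding A'_def by simp
  have PX: "principal_open X (\<lambda>_. 1) = X" unfolding principal_open_def by simp
  have a1: "\<forall>t. \<forall>x\<in>principal_open X (\<lambda>_. 1). A' t x \<in> principal_open X (\<lambda>_. 1)"
    unfolding PX A'_def using act_U Umem by auto
  have a3: "\<forall>x\<in>principal_open X (\<lambda>_. 1). A' 0 x = x"
    unfolding PX A'_def using act0 Umem by auto
  have a4: "\<forall>s t. \<forall>x\<in>principal_open X (\<lambda>_. 1). A' (s + t) x = A' s (A' t x)"
  proof (intro allI ballI)
    fix s t x assume "x \<in> principal_open X (\<lambda>_. 1)"
    then have xX: "x \<in> X" using PX by simp
    show "A' (s + t) x = A' s (A' t x)"
    proof (cases "h x = 0")
      case True
      then show ?thesis unfolding A'_def by simp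
    next
      case False
      then have xU: "x \<in> ?U" using xX Umem by simp
      have yU: "A' t x \<in> ?U" using A'U[OF xU] act_U xU by simp
      have hy: "h (A' t x) = h x" using A'U[OF xU] inv[OF xU] by simp
      have "A' s (A' t x) = A (h x ^ N * s) (A (h x ^ N * t) x)"
        using A'U[OF yU] hy A'U[OF xU] by simp
      also have "\<dots> = A (h x ^ N * s + h x ^ N * t) x" using actadd xU by simp
      also have "\<dots> = A' (s + t) x" using A'U[OF xU] by (simp add: distrib_left)
      finally show ?thesis by simp
    qed
  qed
  have a2: "\<forall>j. regular_on_Ga_times X (\<lambda>_. 1) (\<lambda>t x. A' t x j)"
  proof
    fix j
    let ?d = "dd j" and ?k = "kk j" and ?q = "qq j"
    define q' where "q' = (\<lambda>i. if i = 0 then (\<lambda>x. x j) else (\<lambda>x. ?q i x * h x ^ (N * i - ?k)))"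
    have q'pf: "q' i \<in> polyfun" for i
    proof (cases "i = 0")
      case True then show ?thesis unfolding q'_def using pf_var by simp
    next
      case False then show ?thesis unfolding q'_def
        using pf_mult[OF _ polyfun_power[OF assms(3)]] DKQ by simp
    qed
    have id: "A' t x j = (\<Sum>i\<le>?d. q' i x * t ^ i) / 1 ^ 0" if xX: "x \<in> X" for t x
    proof (cases "h x = 0")
      case True
      have "(\<Sum>i\<le>?d. q' i x * t ^ i) = (\<Sum>i\<le>?d. if i = 0 then x j else 0)"
      proof (rule sum.cong)
        fix i assume "i \<in> {..?d}"
        show "q' i x * t ^ i = (if i = 0 then x j else 0)"
        proof (cases "i = 0")
          case False
          have "N \<le> N * i" using False by simp
          then have "N * i - ?k > 0" using kkN[of j] by linarith
          then show ?thesis using False True unfolding q'_def by simp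
        qed (simp add: q'_def)
      qed simp
      then show ?thesis using True unfolding A'_def by simp
    next
      case False
      then have xU: "x \<in> ?U" using xX Umem by simp
      have q0: "?q 0 x / h x ^ ?k = x j"
      proof -
        have "x j = A 0 x j" using act0 xU by simp
        also have "\<dots> = (\<Sum>i\<le>?d. ?q i x * 0 ^ i) / h x ^ ?k" using DKQ xU by blast
        also have "\<dots> = ?q 0 x / h x ^ ?k"
          by (rule sum_zero_pow)
        finally show ?thesis by simp
      qed
      have "A' t x j = (\<Sum>i\<le>?d. ?q i x * (h x ^ N * t) ^ i) / h x ^ ?k"
        using A'U[OF xU] DKQ xU by simp
      also have "\<dots> = (\<Sum>i\<le>?d. ?q i x * (h x ^ N * t) ^ i / h x ^ ?k)"
        by (simp add: sum_divide_distrib)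
      also have "\<dots> = (\<Sum>i\<le>?d. q' i x * t ^ i)"
      proof (rule sum.cong)
        fix i assume "i \<in> {..?d}"
        show "?q i x * (h x ^ N * t) ^ i / h x ^ ?k = q' i x * t ^ i"
        proof (cases "i = 0")
          case True then show ?thesis using q0 unfolding q'_def by simp
        next
          case i: False
          have "N \<le> N * i" using i by simp
          then have "?k \<le> N * i" using kkN[of j] by linarith
          then have "h x ^ (N * i) = h x ^ (N * i - ?k) * h x ^ ?k"
            by (simp add: power_add[symmetric])
          have hk: "h x ^ ?k \<noteq> 0" using False by simp
          have "(h x ^ N * t) ^ i = h x ^ (N * i) * t ^ i"
            by (simp add: power_mult_distrib power_mult)
          then have "?q i x * (h x ^ N * t) ^ i / h x ^ ?k
              = ?q i x * h x ^ (N * i - ?k) * t ^ i * (h x ^ ?k / h x ^ ?k)"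
            using \<open>h x ^ (N * i) = _\<close> by (simp only: ac_simps times_divide_eq_right)
          also have "\<dots> = ?q i x * h x ^ (N * i - ?k) * t ^ i" using hk by (metis divide_self mult_1_right)
          finally show ?thesis using i unfolding q'_def by simp
        qed
      qed simp
      finally show ?thesis by simp
    qed
    show "regular_on_Ga_times X (\<lambda>_. 1) (\<lambda>t x. A' t x j)"
      unfolding regular_on_Ga_times_def PX
      using q'pf id by blast
  qed
  have a5: "\<forall>t. t \<noteq> 0 \<longrightarrow> (\<exists>x\<in>principal_open X (\<lambda>_. 1). A' t x \<noteq> x)"
  proof (intro allI impI)
    fix t :: 'a assume t0: "t \<noteq> 0"
    obtain x0 where x0U: "x0 \<in> ?U" and x0m: "A 1 x0 \<noteq> x0" using eff[rule_format, of 1] by auto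
    define c where "c = h x0 ^ N * t"
    have c0: "c \<noteq> 0" using t0 x0U Umem unfolding c_def by simp
    show "\<exists>x\<in>principal_open X (\<lambda>_. 1). A' t x \<noteq> x"
    proof (rule ccontr)
      assume "\<not> ?thesis"
      then have "A' t x0 = x0" using x0U PX Umem by auto
      then have fix1: "A c x0 = x0" using A'U[OF x0U] c_def by simp
      have fixn: "A (of_nat n * c) x0 = x0" for n
      proof (induction n)
        case 0 then show ?case using act0 x0U by simp
      next
        case (Suc n)
        have "A (of_nat (Suc n) * c) x0 = A (c + of_nat n * c) x0" by (simp add: algebra_simps)
        also have "\<dots> = A c (A (of_nat n * c) x0)" using actadd x0U by blast
        finally show ?case using Suc fix1 by simp
      qed
      have inf: "infinite (range (\<lambda>n::nat. of_nat n * c))"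
      proof -
        have "inj (\<lambda>n::nat. of_nat n * c)" using c0 by (auto intro!: injI)
        then show ?thesis using range_inj_infinite by blast
      qed
      have "A s x0 j = x0 j" for s j
      proof -
        have p: "ptf (\<lambda>s. A s x0 j - x0 j)"
        proof -
          obtain Q where "\<forall>s. A s x0 j = poly Q s" using coord_ptf[OF x0U] unfolding ptf_def by blast
          then show ?thesis unfolding ptf_def by (intro exI[of _ "Q - [:x0 j:]"]) simp
        qed
        have "A s x0 j - x0 j = 0"
          by (rule ptf_zero_on_infinite[OF p inf]) (auto simp: fixn)
        then show ?thesis by simp
      qed
      then have "A 1 x0 = x0" by auto
      then show False using x0m by simp
    qed
  qed
  have orb: "Ga_orbit A x = Ga_orbit A' x" if xU: "x \<in> ?U" for x
  proof -
    have hx: "h x ^ N \<noteq> 0" using xU Umem by simp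
    have "Ga_orbit A' x = {A (h x ^ N * t) x | t. True}"
      unfolding Ga_orbit_def using A'U[OF xU] by simp
    also have "\<dots> = {A t x | t. True}"
    proof (intro set_eqI iffI)
      fix y assume "y \<in> {A t x | t. True}"
      then obtain t where "y = A t x" by blast
      then have "y = A (h x ^ N * (t / h x ^ N)) x" using hx by simp
      then show "y \<in> {A (h x ^ N * t) x | t. True}" by blast
    qed blast
    finally show ?thesis unfolding Ga_orbit_def by simp
  qed
  show ?thesis
    by (rule exI[of _ A']) (use a1 a2 a3 a4 a5 orb in \<open>simp add: effective_Ga_action_def\<close>)
qed

end
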